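(* Let $(A,P)$ be a complete filtered Rota--Baxter algebra of weight zero over a field $\mathbb{K}$ of characteristic zero, and let $a\in A_1$. Let $\chi_0:A_1\to A_1$ be the weight zero BCH-recursion, i.e. the map determined by $$\chi_0(a)=-\frac{\mathrm{ad}\,P(\chi_0(a))}{1-e^{\mathrm{ad}\,P(\chi_0(a))}}(a)=\sum_{n\ge0}\frac{B_n}{n!}\big(\mathrm{ad}\,P(\chi_0(a))\big)^n(a),$$ where $B_n$ are the Bernoulli numbers ($B_0=1$, $B_1=-1/2$, $B_2=1/6,\dots$) and $\mathrm{ad}\,u(v)=uv-vu$. Then: (1) the equation $x=1-P(x\,a)$ has the unique solution $x=\exp\big(-P(\chi_0(a))\big)$; (2) the equation $y=1+P(a\,y)$ has the unique solution $y=\exp\big(P(\chi_0(a))\big)$.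
   Context: A Rota--Baxter algebra of weight zero is an associative algebra $A$ with a linear map $P$ satisfying $P(x)P(y)=P(xP(y))+P(P(x)y)$ for all $x,y\in A$. A complete filtered Rota--Baxter algebra is one with a decreasing filtration $A=A_0\supseteq A_1\supseteq\cdots$ by ideals $A_n$ with $P(A_n)\subseteq A_n$, $A_mA_n\subseteq A_{m+n}$, and $A\cong\varprojlim A/A_n$. The map $\chi_0$ is the unique map $A_1\to A_1$ satisfying the displayed equation (determined inductively with respect to the filtration). *)

theory Defs
  imports Complex_Main
begin

fun bernoulli :: "nat \<Rightarrow> rat" where
  "bernoulli n = (if n = 0 then 1 else
     - (\<Sum>k\<in>{..<n}. of_nat ((n + 1) choose k) * (if k < n then bernoulli k else 0)) / of_nat (n + 1))"

declare bernoulli.simps [simp del]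

definition is_algebra :: "('k::field \<Rightarrow> 'a::ring_1 \<Rightarrow> 'a) \<Rightarrow> bool" where
  "is_algebra smult \<longleftrightarrow>
     (\<forall>c x y. smult c (x + y) = smult c x + smult c y) \<and>
     (\<forall>c d x. smult (c + d) x = smult c x + smult d x) \<and>
     (\<forall>c d x. smult (c * d) x = smult c (smult d x)) \<and>
     (\<forall>x. smult 1 x = x) \<and>
     (\<forall>c x y. smult c (x * y) = smult c x * y) \<and>
     (\<forall>c x y. smult c (x * y) = x * smult c y)"

definition is_RB0 :: "('k::field \<Rightarrow> 'a::ring_1 \<Rightarrow> 'a) \<Rightarrow> ('a \<Rightarrow> 'a) \<Rightarrow> bool" where
  "is_RB0 smult P \<longleftrightarrow>
     (\<forall>x y. P (x + y) = P x + P y) \<and>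
     (\<forall>c x. P (smult c x) = smult c (P x)) \<and>
     (\<forall>x y. P x * P y = P (x * P y) + P (P x * y))"

definition filt_lim :: "(nat \<Rightarrow> 'a::ab_group_add set) \<Rightarrow> (nat \<Rightarrow> 'a) \<Rightarrow> 'a \<Rightarrow> bool" where
  "filt_lim F s l \<longleftrightarrow> (\<forall>k. \<exists>N. \<forall>m\<ge>N. s m - l \<in> F k)"

definition filt_cauchy :: "(nat \<Rightarrow> 'a::ab_group_add set) \<Rightarrow> (nat \<Rightarrow> 'a) \<Rightarrow> bool" where
  "filt_cauchy F s \<longleftrightarrow> (\<forall>k. \<exists>N. \<forall>m\<ge>N. \<forall>n\<ge>N. s m - s n \<in> F k)"

definition filt_sums :: "(nat \<Rightarrow> 'a::ab_group_add set) \<Rightarrow> (nat \<Rightarrow> 'a) \<Rightarrow> 'a \<Rightarrow> bool" where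
  "filt_sums F f l \<longleftrightarrow> filt_lim F (\<lambda>m. \<Sum>i<m. f i) l"

text \<open>A decreasing filtration by (two-sided, K-linear) ideals, stable under P,
  multiplicative, and complete and Hausdorff, i.e. A is isomorphic to the
  inverse limit of the A/A_n.\<close>

definition complete_filtered_RB0 ::
  "('k::field \<Rightarrow> 'a::ring_1 \<Rightarrow> 'a) \<Rightarrow> ('a \<Rightarrow> 'a) \<Rightarrow> (nat \<Rightarrow> 'a set) \<Rightarrow> bool" where
  "complete_filtered_RB0 smult P F \<longleftrightarrow>
     is_algebra smult \<and> is_RB0 smult P \<and>
     F 0 = UNIV \<and>
     (\<forall>n. F (Suc n) \<subseteq> F n) \<and>
     (\<forall>n. 0 \<in> F n \<and> (\<forall>x\<in>F n. \<forall>y\<in>F n. x + y \<in> F n \<and> x - y \<in> F n)) \<and>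
     (\<forall>n c. \<forall>x\<in>F n. smult c x \<in> F n) \<and>
     (\<forall>n. \<forall>x\<in>F n. \<forall>y. x * y \<in> F n \<and> y * x \<in> F n) \<and>
     (\<forall>n. P ` F n \<subseteq> F n) \<and>
     (\<forall>m n. \<forall>x\<in>F m. \<forall>y\<in>F n. x * y \<in> F (m + n)) \<and>
     (\<Inter>n. F n) = {0} \<and>
     (\<forall>s. filt_cauchy F s \<longrightarrow> (\<exists>l. filt_lim F s l))"

definition filt_exp :: "(nat \<Rightarrow> 'a::ring_1 set) \<Rightarrow> ('k::field_char_0 \<Rightarrow> 'a \<Rightarrow> 'a) \<Rightarrow> 'a \<Rightarrow> 'a" where
  "filt_exp F smult x = (THE l. filt_sums F (\<lambda>n. smult (inverse (fact n)) (x ^ n)) l)"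

definition ad :: "'a::ring \<Rightarrow> 'a \<Rightarrow> 'a" where
  "ad u v = u * v - v * u"

end

theory Submission
  imports Defs
begin

locale cfrb =
  fixes sm :: "'k::field_char_0 \<Rightarrow> 'a::ring_1 \<Rightarrow> 'a" and P :: "'a \<Rightarrow> 'a" and F :: "nat \<Rightarrow> 'a set"
  assumes RB: "complete_filtered_RB0 sm P F"
begin

lemma alg: "is_algebra sm" and rb0: "is_RB0 sm P"
  using RB unfolding complete_filtered_RB0_def by simp_all

lemma sm_add: "sm c (x + y) = sm c x + sm c y"
  using alg unfolding is_algebra_def by blast
lemma sm_addc: "sm (c + d) x = sm c x + sm d x"
  using alg unfolding is_algebra_def by blast
lemma sm_mult: "sm (c * d) x = sm c (sm d x)"
  using alg unfolding is_algebra_def by blast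
lemma sm_one: "sm 1 x = x"
  using alg unfolding is_algebra_def by blast
lemma sm_left: "sm c (x * y) = sm c x * y"
  using alg unfolding is_algebra_def by blast
lemma sm_right: "sm c (x * y) = x * sm c y"
  using alg unfolding is_algebra_def by blast

lemma P_add: "P (x + y) = P x + P y"
  using rb0 unfolding is_RB0_def by blast
lemma P_rb: "P x * P y = P (x * P y) + P (P x * y)"
  using rb0 unfolding is_RB0_def by blast

lemma RBc: "F 0 = UNIV"
    "\<forall>n. F (Suc n) \<subseteq> F n"
    "\<forall>n. 0 \<in> F n \<and> (\<forall>x\<in>F n. \<forall>y\<in>F n. x + y \<in> F n \<and> x - y \<in> F n)"
    "\<forall>n c. \<forall>x\<in>F n. sm c x \<in> F n"
    "\<forall>n. \<forall>x\<in>F n. \<forall>y. x * y \<in> F n \<and> y * x \<in> F n"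
    "\<forall>n. P ` F n \<subseteq> F n"
    "\<forall>m n. \<forall>x\<in>F m. \<forall>y\<in>F n. x * y \<in> F (m + n)"
    "(\<Inter>n. F n) = {0}"
    "\<forall>s. filt_cauchy F s \<longrightarrow> (\<exists>l. filt_lim F s l)"
  using RB unfolding complete_filtered_RB0_def apply -
  by (elim conjE, assumption)+

lemma F0: "F 0 = UNIV" using RBc(1) .
lemma F_Suc: "F (Suc n) \<subseteq> F n" using RBc(2) by blast
lemma F_zero: "0 \<in> F n" using RBc(3) by blast
lemma F_add: "x \<in> F n \<Longrightarrow> y \<in> F n \<Longrightarrow> x + y \<in> F n" using RBc(3) by blast
lemma F_diff: "x \<in> F n \<Longrightarrow> y \<in> F n \<Longrightarrow> x - y \<in> F n" using RBc(3) by blast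
lemma F_sm: "x \<in> F n \<Longrightarrow> sm c x \<in> F n" using RBc(4) by blast
lemma F_multR: "x \<in> F n \<Longrightarrow> x * y \<in> F n" using RBc(5) by blast
lemma F_multL: "x \<in> F n \<Longrightarrow> y * x \<in> F n" using RBc(5) by blast
lemma F_P: "x \<in> F n \<Longrightarrow> P x \<in> F n" using RBc(6) by blast
lemma F_mult: "x \<in> F m \<Longrightarrow> y \<in> F n \<Longrightarrow> x * y \<in> F (m + n)" using RBc(7) by blast
lemma F_Inter: "(\<Inter>n. F n) = {0}" using RBc(8) .
lemma F_complete: "filt_cauchy F s \<Longrightarrow> \<exists>l. filt_lim F s l" using RBc(9) by blast

lemma F_mono: "m \<le> n \<Longrightarrow> F n \<subseteq> F m"
  by (rule lift_Suc_antimono_le[of F], rule F_Suc)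

lemma F_monoI: "x \<in> F n \<Longrightarrow> m \<le> n \<Longrightarrow> x \<in> F m"
  using F_mono by blast

lemma F_uminus: "x \<in> F n \<Longrightarrow> - x \<in> F n"
  using F_diff[OF F_zero] by (metis diff_0)

lemma F_sum: "(\<And>i. i \<in> A \<Longrightarrow> f i \<in> F n) \<Longrightarrow> sum f A \<in> F n"
proof (induction A rule: infinite_finite_induct)
  case (infinite A) then show ?case by (simp add: F_zero)
next
  case empty then show ?case by (simp add: F_zero)
next
  case (insert x A) then show ?case by (simp add: F_add)
qed

lemma hausdorff: "(\<And>k. x \<in> F k) \<Longrightarrow> x = 0"
  using F_Inter by blast

lemma F_pow: "x \<in> F 1 \<Longrightarrow> x ^ n \<in> F n"
proof (induction n)
  case 0 then show ?case by (simp add: F0)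
next
  case (Suc n)
  have "x * x ^ n \<in> F (1 + n)" using F_mult[OF Suc.prems Suc.IH[OF Suc.prems]] .
  then show ?case by simp
qed

lemma sm_zero: "sm c 0 = 0"
  using sm_add[of c 0 0] by simp
lemma sm_zero_left: "sm 0 x = 0"
  using sm_addc[of 0 0 x] by simp
lemma sm_neg: "sm c (- x) = - sm c x"
proof -
  have "sm c x + sm c (- x) = 0" using sm_add[of c x "-x"] sm_zero by simp
  then show ?thesis by (metis add.inverse_unique)
qed
lemma sm_diff: "sm c (x - y) = sm c x - sm c y"
  using sm_add[of c x "-y"] sm_neg by simp
lemma sm_negc: "sm (- c) x = - sm c x"
proof -
  have "sm c x + sm (- c) x = 0" using sm_addc[of c "-c" x] sm_zero_left by simp
  then show ?thesis by (metis add.inverse_unique)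
qed
lemma sm_sum: "sm c (sum f A) = (\<Sum>i\<in>A. sm c (f i))"
  by (induction A rule: infinite_finite_induct) (auto simp: sm_zero sm_add)
lemma sm_sumc: "sm (sum g A) x = (\<Sum>i\<in>A. sm (g i) x)"
  by (induction A rule: infinite_finite_induct) (auto simp: sm_zero_left sm_addc)
lemma sm_of_nat: "sm (of_nat n) x = of_nat n * x"
  by (induction n) (auto simp: sm_zero_left sm_addc sm_one algebra_simps)
lemma sm_both: "sm c x * sm d y = sm (c * d) (x * y)"
  by (metis sm_left sm_right sm_mult)

lemma P_zero: "P 0 = 0"
  using P_add[of 0 0] by simp
lemma P_neg: "P (- x) = - P x"
proof -
  have "P x + P (- x) = 0" using P_add[of x "-x"] P_zero by simp
  then show ?thesis by (metis add.inverse_unique)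
qed
lemma P_diff: "P (x - y) = P x - P y"
  using P_add[of x "-y"] P_neg by simp

end

context cfrb begin

definition tends0 :: "(nat \<Rightarrow> 'a) \<Rightarrow> bool" where
  "tends0 f \<longleftrightarrow> (\<forall>k. \<exists>N. \<forall>n\<ge>N. f n \<in> F k)"

definition ssum :: "(nat \<Rightarrow> 'a) \<Rightarrow> 'a" where
  "ssum f = (THE l. filt_sums F f l)"

definition linF :: "('a \<Rightarrow> 'a) \<Rightarrow> bool" where
  "linF T \<longleftrightarrow> (\<forall>x y. T (x + y) = T x + T y) \<and> (\<forall>k x. x \<in> F k \<longrightarrow> T x \<in> F k)"

lemma lim_unique:
  assumes "filt_lim F s l1" "filt_lim F s l2" shows "l1 = l2"
proof -
  have "l1 - l2 \<in> F k" for k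
  proof -
    obtain N1 where N1: "\<forall>m\<ge>N1. s m - l1 \<in> F k" using assms(1) unfolding filt_lim_def by blast
    obtain N2 where N2: "\<forall>m\<ge>N2. s m - l2 \<in> F k" using assms(2) unfolding filt_lim_def by blast
    have "(s (max N1 N2) - l2) - (s (max N1 N2) - l1) \<in> F k"
      by (rule F_diff) (use N1 N2 in auto)
    then show ?thesis by simp
  qed
  then have "l1 - l2 = 0" by (rule hausdorff)
  then show ?thesis by simp
qed

lemma sums_unique: "filt_sums F f l1 \<Longrightarrow> filt_sums F f l2 \<Longrightarrow> l1 = l2"
  unfolding filt_sums_def by (rule lim_unique)

lemma psum_diff: fixes f :: "nat \<Rightarrow> 'a" shows "(n::nat) \<le> m \<Longrightarrow> (\<Sum>i<m. f i) - (\<Sum>i<n. f i) = sum f {n..<m}"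
  using sum_diff_nat_ivl[of 0 n m f] by (simp add: atLeast0LessThan)

lemma tends0_sums: assumes "tends0 f" shows "filt_sums F f (ssum f)"
proof -
  have "filt_cauchy F (\<lambda>m. \<Sum>i<m. f i)"
    unfolding filt_cauchy_def
  proof
    fix k
    obtain N where N: "\<forall>n\<ge>N. f n \<in> F k" using assms unfolding tends0_def by blast
    have "(\<Sum>i<m. f i) - (\<Sum>i<n. f i) \<in> F k" if "m \<ge> N" "n \<ge> N" for m n
    proof (cases "n \<le> m")
      case True
      then show ?thesis using N that by (simp add: psum_diff) (intro F_sum, auto)
    next
      case False
      then have "(\<Sum>i<n. f i) - (\<Sum>i<m. f i) \<in> F k"
        using N that by (simp add: psum_diff) (intro F_sum, auto)
      then have "- ((\<Sum>i<n. f i) - (\<Sum>i<m. f i)) \<in> F k" by (rule F_uminus)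
      then show ?thesis by simp
    qed
    then show "\<exists>N. \<forall>m\<ge>N. \<forall>n\<ge>N. (\<Sum>i<m. f i) - (\<Sum>i<n. f i) \<in> F k" by blast
  qed
  then obtain l where l: "filt_sums F f l" using F_complete unfolding filt_sums_def by blast
  have "ssum f = l" unfolding ssum_def
    using l sums_unique by blast
  then show ?thesis using l by simp
qed

lemma ssum_eq: "filt_sums F f l \<Longrightarrow> ssum f = l"
  unfolding ssum_def using sums_unique by blast

lemma tends0_F: "(\<And>n. f n \<in> F n) \<Longrightarrow> tends0 f"
  unfolding tends0_def using F_monoI by blast

lemma tends0_F1: "(\<And>n. f n \<in> F (n + j)) \<Longrightarrow> tends0 f"
  by (rule tends0_F) (metis F_monoI le_add1)

lemma tail:
  assumes "filt_sums F f l" "\<And>i. i \<ge> N \<Longrightarrow> f i \<in> F K"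
  shows "l - (\<Sum>i<N. f i) \<in> F K"
proof -
  obtain M where M: "\<forall>m\<ge>M. (\<Sum>i<m. f i) - l \<in> F K"
    using assms(1) unfolding filt_sums_def filt_lim_def by blast
  define m where "m = max M N"
  have 1: "(\<Sum>i<m. f i) - l \<in> F K" using M m_def by simp
  have 2: "(\<Sum>i<m. f i) - (\<Sum>i<N. f i) \<in> F K"
    using assms(2) by (simp add: m_def psum_diff) (intro F_sum, auto)
  have "((\<Sum>i<m. f i) - (\<Sum>i<N. f i)) - ((\<Sum>i<m. f i) - l) \<in> F K"
    using 1 2 by (rule F_diff[rotated])
  then show ?thesis by simp
qed

lemma sums_closed: "filt_sums F f l \<Longrightarrow> (\<And>i. f i \<in> F K) \<Longrightarrow> l \<in> F K"
  using tail[of f l 0 K] by simp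

lemma ssum_closed: "tends0 f \<Longrightarrow> (\<And>i. f i \<in> F K) \<Longrightarrow> ssum f \<in> F K"
  using sums_closed tends0_sums by blast

lemma linF_zero: "linF T \<Longrightarrow> T 0 = 0"
  unfolding linF_def by (metis add_cancel_right_right add_0)
lemma linF_neg: "linF T \<Longrightarrow> T (- x) = - T x"
proof -
  assume L: "linF T"
  have "T x + T (- x) = 0" using L linF_zero[OF L] unfolding linF_def by (metis add.right_inverse)
  then show ?thesis by (metis add.inverse_unique)
qed
lemma linF_add: "linF T \<Longrightarrow> T (x + y) = T x + T y"
  unfolding linF_def by blast
lemma linF_diff: "linF T \<Longrightarrow> T (x - y) = T x - T y"
  using linF_add[of T x "-y"] linF_neg[of T y] by simp
lemma linF_F: "linF T \<Longrightarrow> x \<in> F k \<Longrightarrow> T x \<in> F k"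
  unfolding linF_def by blast
lemma linF_sum: "linF T \<Longrightarrow> T (sum f A) = (\<Sum>i\<in>A. T (f i))"
  by (induction A rule: infinite_finite_induct) (auto simp: linF_zero linF_add)

lemma linF_sums:
  assumes L: "linF T" and S: "filt_sums F f l"
  shows "filt_sums F (\<lambda>n. T (f n)) (T l)"
  unfolding filt_sums_def filt_lim_def
proof
  fix k
  obtain N where "\<forall>m\<ge>N. (\<Sum>i<m. f i) - l \<in> F k" using S unfolding filt_sums_def filt_lim_def by blast
  then have "\<forall>m\<ge>N. T ((\<Sum>i<m. f i) - l) \<in> F k" using linF_F[OF L] by blast
  then show "\<exists>N. \<forall>m\<ge>N. (\<Sum>i<m. T (f i)) - T l \<in> F k"
    by (auto simp: linF_diff[OF L] linF_sum[OF L])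
qed

lemma tends0_linF: "linF T \<Longrightarrow> tends0 f \<Longrightarrow> tends0 (\<lambda>n. T (f n))"
  unfolding tends0_def using linF_F by blast

lemma ssum_linF: "linF T \<Longrightarrow> tends0 f \<Longrightarrow> ssum (\<lambda>n. T (f n)) = T (ssum f)"
  using linF_sums tends0_sums ssum_eq by blast

lemma sums_add:
  assumes "filt_sums F f l1" "filt_sums F g l2"
  shows "filt_sums F (\<lambda>n. f n + g n) (l1 + l2)"
  unfolding filt_sums_def filt_lim_def
proof
  fix k
  obtain N1 where N1: "\<forall>m\<ge>N1. (\<Sum>i<m. f i) - l1 \<in> F k" using assms(1) unfolding filt_sums_def filt_lim_def by blast
  obtain N2 where N2: "\<forall>m\<ge>N2. (\<Sum>i<m. g i) - l2 \<in> F k" using assms(2) unfolding filt_sums_def filt_lim_def by blast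
  have "\<forall>m\<ge>max N1 N2. ((\<Sum>i<m. f i) - l1) + ((\<Sum>i<m. g i) - l2) \<in> F k"
    using N1 N2 F_add by simp
  then show "\<exists>N. \<forall>m\<ge>N. (\<Sum>i<m. f i + g i) - (l1 + l2) \<in> F k"
    by (intro exI[of _ "max N1 N2"]) (simp add: sum.distrib algebra_simps)
qed

lemma sums_shift:
  assumes "filt_sums F f l"
  shows "filt_sums F (\<lambda>n. f (Suc n)) (l - f 0)"
  unfolding filt_sums_def filt_lim_def
proof
  fix k
  obtain N where N: "\<forall>m\<ge>N. (\<Sum>i<m. f i) - l \<in> F k" using assms unfolding filt_sums_def filt_lim_def by blast
  have eq: "(\<Sum>i<m. f (Suc i)) - (l - f 0) = (\<Sum>i<Suc m. f i) - l" for m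
    unfolding sum.lessThan_Suc_shift by (simp add: algebra_simps)
  show "\<exists>N. \<forall>m\<ge>N. (\<Sum>i<m. f (Suc i)) - (l - f 0) \<in> F k"
    using N eq le_SucI by metis
qed

lemma sums_single: "filt_sums F (\<lambda>n. if n = 0 then x else 0) x"
  unfolding filt_sums_def filt_lim_def
proof
  fix k
  have "\<forall>m\<ge>1. (\<Sum>i<(m::nat). (if i = 0 then x else 0)) - x \<in> F k"
  proof (intro allI impI)
    fix m :: nat assume "m \<ge> 1"
    then have "(\<Sum>i<m. (if i = 0 then x else 0)) = x"
      by (induction m) auto
    then show "(\<Sum>i<m. (if i = 0 then x else 0)) - x \<in> F k" by (simp add: F_zero)
  qed
  then show "\<exists>N. \<forall>m\<ge>N. (\<Sum>i<(m::nat). (if i = 0 then x else 0)) - x \<in> F k" by blast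
qed

lemma linF_multL: "linF (\<lambda>v. x * v)"
  unfolding linF_def by (auto simp: distrib_left F_multL)
lemma linF_multR: "linF (\<lambda>v. v * x)"
  unfolding linF_def by (auto simp: distrib_right F_multR)
lemma linF_P: "linF P"
  unfolding linF_def by (auto simp: P_add F_P)
lemma linF_sm: "linF (sm c)"
  unfolding linF_def by (auto simp: sm_add F_sm)
lemma linF_uminus: "linF uminus"
  unfolding linF_def by (auto simp: F_uminus)
lemma linF_ad: "linF (ad w)"
  unfolding linF_def ad_def by (auto simp: algebra_simps intro: F_diff[OF F_multL F_multR])
lemma linF_funpow: "linF T \<Longrightarrow> linF (T ^^ m)"
  by (induction m) (auto simp: linF_def)

lemma double_sum:
  assumes h: "\<And>i j. h i j \<in> F (i + j)"
  shows "ssum (\<lambda>i. ssum (\<lambda>j. h i j)) = ssum (\<lambda>n. \<Sum>i\<le>n. h i (n - i))"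
proof -
  define H where "H i = ssum (\<lambda>j. h i j)" for i
  define T where "T n = (\<Sum>i\<le>n. h i (n - i))" for n
  have th: "tends0 (h i)" for i by (rule tends0_F1[of _ i]) (metis h add.commute)
  have Hs: "filt_sums F (h i) (H i)" for i unfolding H_def by (rule tends0_sums[OF th])
  have HF: "H i \<in> F i" for i
    by (rule sums_closed[OF Hs]) (metis h F_monoI le_add1)
  have TF: "T n \<in> F n" for n
    unfolding T_def by (intro F_sum) (metis h le_add_diff_inverse atMost_iff)
  have sH: "filt_sums F H (ssum H)" by (rule tends0_sums, rule tends0_F, rule HF)
  have sT: "filt_sums F T (ssum T)" by (rule tends0_sums, rule tends0_F, rule TF)
  have "ssum H - ssum T \<in> F K" for K
  proof -
    have a: "ssum H - (\<Sum>i<K. H i) \<in> F K"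
      by (rule tail[OF sH]) (metis HF F_monoI)
    have b: "ssum T - (\<Sum>n<K. T n) \<in> F K"
      by (rule tail[OF sT]) (metis TF F_monoI)
    have c: "(\<Sum>i<K. H i) - (\<Sum>i<K. \<Sum>j<K - i. h i j) \<in> F K"
    proof -
      have "H i - (\<Sum>j<K - i. h i j) \<in> F K" if "i < K" for i
        by (rule tail[OF Hs]) (metis h F_monoI that le_add_diff_inverse less_imp_le_nat add_le_mono1 add.commute)
      then have "(\<Sum>i<K. H i - (\<Sum>j<K - i. h i j)) \<in> F K" by (intro F_sum) auto
      then show ?thesis by (simp add: sum_subtractf)
    qed
    have d: "(\<Sum>i<K. \<Sum>j<K - i. h i j) = (\<Sum>n<K. T n)"
    proof -
      have st: "Sigma {..<K} (\<lambda>i. {..<K - i}) = {(i, j). i + j < K}" by auto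
      have "(\<Sum>i<K. \<Sum>j<K - i. h i j) = (\<Sum>(i, j)\<in>Sigma {..<K} (\<lambda>i. {..<K - i}). h i j)"
        by (subst sum.Sigma) auto
      also have "\<dots> = (\<Sum>(i, j)\<in>{(i, j). i + j < K}. h i j)" by (simp only: st)
      also have "\<dots> = (\<Sum>n<K. T n)" unfolding T_def by (rule sum.triangle_reindex)
      finally show ?thesis .
    qed
    have "(ssum H - (\<Sum>i<K. H i)) + ((\<Sum>i<K. H i) - (\<Sum>i<K. \<Sum>j<K - i. h i j)) - (ssum T - (\<Sum>n<K. T n)) \<in> F K"
      by (rule F_diff[OF F_add[OF a c] b])
    then show ?thesis using d by (simp add: algebra_simps)
  qed
  then have "ssum H - ssum T = 0" by (rule hausdorff)
  then show ?thesis unfolding H_def T_def by simp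
qed

end

definition adR :: "'a::ring \<Rightarrow> 'a \<Rightarrow> 'a" where
  "adR u v = v * u - u * v"

definition om :: "'a::ring_1 \<Rightarrow> 'a \<Rightarrow> nat \<Rightarrow> 'a" where
  "om W c n = (\<Sum>k\<le>n. W ^ k * c * W ^ (n - k))"

lemma sum_atMost_rev: "(\<Sum>i\<le>n. f (n - i)) = (\<Sum>i\<le>(n::nat). f i)"
  using sum.atLeastAtMost_rev[of f 0 n] by (simp add: atLeast0AtMost)

lemma om_0: "om W c 0 = c"
  by (simp add: om_def)

lemma om_Suc_L: "om W c (Suc n) = W * om W c n + c * W ^ Suc n"
proof -
  have "om W c (Suc n) = c * W ^ Suc n + (\<Sum>k\<le>n. W ^ Suc k * c * W ^ (Suc n - Suc k))"
    unfolding om_def by (subst sum.atMost_Suc_shift) simp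
  also have "(\<Sum>k\<le>n. W ^ Suc k * c * W ^ (Suc n - Suc k)) = W * om W c n"
    unfolding om_def by (simp add: sum_distrib_left mult.assoc)
  finally show ?thesis by (simp add: add.commute)
qed

lemma om_Suc_R: "om W c (Suc n) = om W c n * W + W ^ Suc n * c"
proof -
  have "om W c (Suc n) = (\<Sum>k\<le>n. W ^ k * c * W ^ (Suc n - k)) + W ^ Suc n * c"
    unfolding om_def by (subst sum.atMost_Suc) simp
  also have "(\<Sum>k\<le>n. W ^ k * c * W ^ (Suc n - k)) = om W c n * W"
    unfolding om_def sum_distrib_right
  proof (rule sum.cong)
    fix k assume "k \<in> {..n}"
    then have "Suc n - k = Suc (n - k)" by auto
    then show "W ^ k * c * W ^ (Suc n - k) = W ^ k * c * W ^ (n - k) * W"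
      by (simp add: mult.assoc power_commutes)
  qed simp
  finally show ?thesis .
qed

lemma om_ad: "om W c n = (\<Sum>i\<le>n. of_nat (Suc n choose Suc i) * ((ad W ^^ i) c * W ^ (n - i)))"
proof (induction n)
  case 0 then show ?case by (simp add: om_0)
next
  case (Suc n)
  define A where "A i = (ad W ^^ i) c" for i
  define g where "g i = A i * W ^ (Suc n - i)" for i
  have AS: "A (Suc i) = W * A i - A i * W" for i by (simp add: A_def ad_def)
  have key: "W * (A i * W ^ (n - i)) = A (Suc i) * W ^ (n - i) + g i" if "i \<le> n" for i
  proof -
    have "Suc n - i = Suc (n - i)" using that by auto
    then show ?thesis by (simp add: g_def AS algebra_simps)
  qed
  have "om W c (Suc n) = W * om W c n + c * W ^ Suc n" by (rule om_Suc_L)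
  also have "W * om W c n = (\<Sum>i\<le>n. of_nat (Suc n choose Suc i) * (W * (A i * W ^ (n - i))))"
  proof -
    have ofc: "W * (of_nat k * X) = of_nat k * (W * X)" for k X
      by (metis mult.assoc mult_of_nat_commute)
    show ?thesis unfolding Suc.IH A_def sum_distrib_left by (simp only: ofc)
  qed
  also have "\<dots> = (\<Sum>i\<le>n. of_nat (Suc n choose Suc i) * (A (Suc i) * W ^ (n - i)))
      + (\<Sum>i\<le>n. of_nat (Suc n choose Suc i) * g i)"
    by (simp add: key distrib_left sum.distrib)
  finally have L: "om W c (Suc n) = (\<Sum>i\<le>n. of_nat (Suc n choose Suc i) * (A (Suc i) * W ^ (n - i)))
      + (\<Sum>i\<le>n. of_nat (Suc n choose Suc i) * g i) + c * W ^ Suc n" .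
  have R1: "(\<Sum>i\<le>Suc n. of_nat (Suc n choose i) * g i)
      = c * W ^ Suc n + (\<Sum>i\<le>n. of_nat (Suc n choose Suc i) * (A (Suc i) * W ^ (n - i)))"
    by (subst sum.atMost_Suc_shift) (simp add: g_def A_def)
  have R2: "(\<Sum>i\<le>Suc n. of_nat (Suc n choose Suc i) * g i) = (\<Sum>i\<le>n. of_nat (Suc n choose Suc i) * g i)"
    by (subst sum.atMost_Suc) (simp del: binomial_Suc_Suc add: binomial_eq_0)
  have "(\<Sum>i\<le>Suc n. of_nat (Suc (Suc n) choose Suc i) * ((ad W ^^ i) c * W ^ (Suc n - i)))
      = (\<Sum>i\<le>Suc n. of_nat (Suc n choose i) * g i) + (\<Sum>i\<le>Suc n. of_nat (Suc n choose Suc i) * g i)"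
    by (simp add: g_def A_def distrib_right sum.distrib)
  also have "\<dots> = om W c (Suc n)" unfolding R1 R2 L by (simp add: algebra_simps)
  finally show ?case by simp
qed

lemma om_adR: "om W c n = (\<Sum>i\<le>n. of_nat (Suc n choose Suc i) * (W ^ (n - i) * (adR W ^^ i) c))"
proof (induction n)
  case 0 then show ?case by (simp add: om_0)
next
  case (Suc n)
  define A where "A i = (adR W ^^ i) c" for i
  define g where "g i = W ^ (Suc n - i) * A i" for i
  have AS: "A (Suc i) = A i * W - W * A i" for i by (simp add: A_def adR_def)
  have key: "(W ^ (n - i) * A i) * W = W ^ (n - i) * A (Suc i) + g i" if "i \<le> n" for i
  proof -
    have "Suc n - i = Suc (n - i)" using that by auto
    have "(W ^ (n - i) * A i) * W = W ^ (n - i) * (A i * W)" by (simp add: mult.assoc)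
    also have "A i * W = A (Suc i) + W * A i" using AS[of i] by simp
    also have "W ^ (n - i) * (A (Suc i) + W * A i) = W ^ (n - i) * A (Suc i) + (W ^ (n - i) * W) * A i"
      by (simp add: distrib_left mult.assoc)
    also have "W ^ (n - i) * W = W ^ (Suc n - i)" using \<open>Suc n - i = Suc (n - i)\<close> by (metis power_Suc2)
    finally show ?thesis by (simp add: g_def)
  qed
  have "om W c (Suc n) = om W c n * W + W ^ Suc n * c" by (rule om_Suc_R)
  also have "om W c n * W = (\<Sum>i\<le>n. of_nat (Suc n choose Suc i) * ((W ^ (n - i) * A i) * W))"
    unfolding Suc.IH A_def sum_distrib_right
    by (simp add: mult.assoc)
  also have "\<dots> = (\<Sum>i\<le>n. of_nat (Suc n choose Suc i) * (W ^ (n - i) * A (Suc i)))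
      + (\<Sum>i\<le>n. of_nat (Suc n choose Suc i) * g i)"
    by (simp add: key distrib_left sum.distrib)
  finally have L: "om W c (Suc n) = (\<Sum>i\<le>n. of_nat (Suc n choose Suc i) * (W ^ (n - i) * A (Suc i)))
      + (\<Sum>i\<le>n. of_nat (Suc n choose Suc i) * g i) + W ^ Suc n * c" .
  have R1: "(\<Sum>i\<le>Suc n. of_nat (Suc n choose i) * g i)
      = W ^ Suc n * c + (\<Sum>i\<le>n. of_nat (Suc n choose Suc i) * (W ^ (n - i) * A (Suc i)))"
    by (subst sum.atMost_Suc_shift) (simp add: g_def A_def)
  have R2: "(\<Sum>i\<le>Suc n. of_nat (Suc n choose Suc i) * g i) = (\<Sum>i\<le>n. of_nat (Suc n choose Suc i) * g i)"
    by (subst sum.atMost_Suc) (simp del: binomial_Suc_Suc add: binomial_eq_0)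
  have "(\<Sum>i\<le>Suc n. of_nat (Suc (Suc n) choose Suc i) * (W ^ (Suc n - i) * (adR W ^^ i) c))
      = (\<Sum>i\<le>Suc n. of_nat (Suc n choose i) * g i) + (\<Sum>i\<le>Suc n. of_nat (Suc n choose Suc i) * g i)"
    by (simp add: g_def A_def distrib_right sum.distrib)
  also have "\<dots> = om W c (Suc n)" unfolding R1 R2 L by (simp add: algebra_simps)
  finally show ?case by simp
qed

lemma bern_sum: "(\<Sum>n\<le>N. of_nat (Suc N choose n) * bernoulli n) = (if N = 0 then 1 else 0)"
proof (cases N)
  case 0 then show ?thesis by (simp add: bernoulli.simps)
next
  case (Suc M)
  have b: "bernoulli (Suc M) = - (\<Sum>k<Suc M. of_nat (Suc (Suc M) choose k) * bernoulli k) / of_nat (Suc (Suc M))"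
    by (subst bernoulli.simps) simp
  have "(\<Sum>n\<le>Suc M. of_nat (Suc (Suc M) choose n) * bernoulli n)
     = (\<Sum>n<Suc M. of_nat (Suc (Suc M) choose n) * bernoulli n) + of_nat (Suc (Suc M)) * bernoulli (Suc M)"
    by (simp add: atMost_Suc lessThan_Suc_atMost[symmetric] add.commute)
  also have "\<dots> = 0" unfolding b by (simp del: of_nat_Suc)
  finally show ?thesis using Suc by simp
qed

lemma bern_coeff: "(\<Sum>i\<le>N. inverse (fact (Suc i)) * (bernoulli (N - i) / fact (N - i)) :: rat)
   = (if N = 0 then 1 else 0)"
proof -
  have "(\<Sum>i\<le>N. inverse (fact (Suc i)) * (bernoulli (N - i) / fact (N - i)) :: rat)
      = (\<Sum>n\<le>N. inverse (fact (Suc (N - n))) * (bernoulli n / fact n))"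
    by (subst sum_atMost_rev[symmetric]) (rule sum.cong, auto)
  also have "\<dots> = (\<Sum>n\<le>N. of_nat (Suc N choose n) * bernoulli n) / fact (Suc N)"
    unfolding sum_divide_distrib
  proof (rule sum.cong)
    fix n assume "n \<in> {..N}"
    then have n: "n \<le> Suc N" "Suc N - n = Suc (N - n)" by auto
    show "inverse (fact (Suc (N - n))) * (bernoulli n / fact n) = of_nat (Suc N choose n) * bernoulli n / fact (Suc N)"
      using n by (simp add: binomial_fact field_simps del: fact_Suc)
  qed simp
  also have "\<dots> = (if N = 0 then 1 else 0)" by (simp add: bern_sum)
  finally show ?thesis .
qed

context cfrb begin

lemma P_sm: "P (sm c x) = sm c (P x)"
  using rb0 unfolding is_RB0_def by blast

lemma ad_app: "ad W x = W * x - x * W" by (simp add: ad_def)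
lemma adR_app: "adR W x = x * W - W * x" by (simp add: adR_def)
lemma funpow_Suc_app: "(f ^^ Suc i) x = f ((f ^^ i) x)" by simp

lemma funpow_F: "(\<And>v k. v \<in> F k \<Longrightarrow> T v \<in> F (Suc k)) \<Longrightarrow> v \<in> F k \<Longrightarrow> (T ^^ i) v \<in> F (k + i)"
  by (induction i) auto

lemma funpow_comm: "(\<And>x. T (S x) = S (T x)) \<Longrightarrow> (T ^^ i) (S x) = S ((T ^^ i) x)"
  by (induction i) auto

lemma ad_F1: "W \<in> F 1 \<Longrightarrow> v \<in> F k \<Longrightarrow> ad W v \<in> F (Suc k)"
proof -
  assume W: "W \<in> F 1" and v: "v \<in> F k"
  have "W * v \<in> F (1 + k)" by (rule F_mult[OF W v])
  moreover have "v * W \<in> F (k + 1)" by (rule F_mult[OF v W])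
  ultimately show ?thesis unfolding ad_def by (simp add: F_diff)
qed

lemma adR_F1: "W \<in> F 1 \<Longrightarrow> v \<in> F k \<Longrightarrow> adR W v \<in> F (Suc k)"
proof -
  assume W: "W \<in> F 1" and v: "v \<in> F k"
  have "W * v \<in> F (1 + k)" by (rule F_mult[OF W v])
  moreover have "v * W \<in> F (k + 1)" by (rule F_mult[OF v W])
  ultimately show ?thesis unfolding adR_def by (simp add: F_diff)
qed

lemma ad_F: "W \<in> F 1 \<Longrightarrow> v \<in> F k \<Longrightarrow> (ad W ^^ i) v \<in> F (k + i)"
  by (rule funpow_F[of "ad W"]) (auto intro: ad_F1)

lemma adR_F: "W \<in> F 1 \<Longrightarrow> v \<in> F k \<Longrightarrow> (adR W ^^ i) v \<in> F (k + i)"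
  by (rule funpow_F[of "adR W"]) (auto intro: adR_F1)

lemma ad_sm1: "ad W (sm c v) = sm c (ad W v)"
  unfolding ad_def sm_diff by (simp add: sm_left[symmetric] sm_right[symmetric])

lemma ad_sm: "(ad W ^^ i) (sm c v) = sm c ((ad W ^^ i) v)"
  by (rule funpow_comm, rule ad_sm1)

lemma linF_adR: "linF (adR w)"
  unfolding linF_def adR_def
proof (intro conjI allI impI)
  fix x y show "(x + y) * w - w * (x + y) = x * w - w * x + (y * w - w * y)"
    by (simp add: algebra_simps)
next
  fix k x assume "x \<in> F k"
  then show "x * w - w * x \<in> F k" using F_diff F_multR F_multL by blast
qed

lemma om_F: assumes "W \<in> F 1" "c \<in> F 1" shows "om W c n \<in> F (Suc n)"
  unfolding om_def
proof (rule F_sum)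
  fix k assume "k \<in> {..n}"
  then have k: "Suc n = (k + 1) + (n - k)" by auto
  have "W ^ k * c \<in> F (k + 1)" by (rule F_mult[OF F_pow[OF assms(1)] assms(2)])
  then have "W ^ k * c * W ^ (n - k) \<in> F ((k + 1) + (n - k))"
    by (rule F_mult[OF _ F_pow[OF assms(1)]])
  then show "W ^ k * c * W ^ (n - k) \<in> F (Suc n)" by (simp only: k)
qed

lemma P_om: "P (om (P c) c n) = (P c) ^ Suc n"
proof (induction n)
  case 0 then show ?case by (simp add: om_0)
next
  case (Suc n)
  have "(P c) ^ Suc (Suc n) = P c * P (om (P c) c n)" using Suc by simp
  also have "\<dots> = P (c * P (om (P c) c n)) + P (P c * om (P c) c n)" by (rule P_rb)
  also have "\<dots> = P (P c * om (P c) c n + c * (P c) ^ Suc n)" using Suc by (simp add: P_add add.commute)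
  also have "\<dots> = P (om (P c) c (Suc n))" by (simp add: om_Suc_L)
  finally show ?case by simp
qed

lemma exp_ssum: "filt_exp F sm W = ssum (\<lambda>n. sm (inverse (fact n)) (W ^ n))"
  unfolding filt_exp_def ssum_def ..

lemma coeff_id: "i \<le> n \<Longrightarrow> (inverse (fact (Suc n)) * of_nat (Suc n choose Suc i) :: 'k)
   = inverse (fact (Suc i)) * inverse (fact (n - i))"
proof -
  assume i: "i \<le> n"
  then have le: "Suc i \<le> Suc n" by auto
  have b: "(of_nat (Suc n choose Suc i) :: 'k) = fact (Suc n) / (fact (Suc i) * fact (n - i))"
    using binomial_fact[OF le] by (simp only: diff_Suc_Suc)
  have nz: "(fact (Suc n) :: 'k) \<noteq> 0" "(fact (Suc i) :: 'k) \<noteq> 0" "(fact (n - i) :: 'k) \<noteq> 0"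
    by (simp_all del: fact_Suc)
  show ?thesis unfolding b using nz by (simp add: field_simps del: fact_Suc)
qed

lemma exp_common:
  assumes c: "c \<in> F 1"
  shows "filt_exp F sm (P c) = 1 + P (ssum (\<lambda>n. sm (inverse (fact (Suc n))) (om (P c) c n)))"
proof -
  define W where "W = P c"
  have WF: "W \<in> F 1" unfolding W_def by (rule F_P[OF c])
  define e where "e n = sm (inverse (fact n)) (W ^ n)" for n
  define q where "q n = sm (inverse (fact (Suc n))) (om W c n)" for n
  have eF: "e n \<in> F n" for n unfolding e_def by (intro F_sm F_pow WF)
  have qF: "q n \<in> F n" for n unfolding q_def by (rule F_sm, rule F_monoI[OF om_F[OF WF c]]) simp
  have se: "filt_sums F e (ssum e)" by (rule tends0_sums, rule tends0_F, rule eF)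
  have e0: "e 0 = 1" by (simp add: e_def sm_one)
  have eS: "e (Suc n) = P (q n)" for n
    unfolding e_def q_def P_sm W_def P_om ..
  have "filt_sums F (\<lambda>n. e (Suc n)) (ssum e - 1)" using sums_shift[OF se] e0 by simp
  then have "ssum (\<lambda>n. P (q n)) = ssum e - 1" using eS ssum_eq by simp
  moreover have "ssum (\<lambda>n. P (q n)) = P (ssum q)"
    by (rule ssum_linF[OF linF_P], rule tends0_F, rule qF)
  ultimately have "ssum e = 1 + P (ssum q)" by (simp add: algebra_simps)
  then show ?thesis unfolding exp_ssum e_def q_def W_def .
qed

lemma exp_L:
  assumes c: "c \<in> F 1"
  shows "filt_exp F sm (P c) = 1 + P (ssum (\<lambda>i. sm (inverse (fact (Suc i))) ((ad (P c) ^^ i) c)) * filt_exp F sm (P c))"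
proof -
  define W where "W = P c"
  have WF: "W \<in> F 1" unfolding W_def by (rule F_P[OF c])
  define e where "e n = sm (inverse (fact n)) (W ^ n)" for n
  define g where "g i = sm (inverse (fact (Suc i))) ((ad W ^^ i) c)" for i
  define q where "q n = sm (inverse (fact (Suc n))) (om W c n)" for n
  have eF: "e n \<in> F n" for n unfolding e_def by (intro F_sm F_pow WF)
  have gF: "g i \<in> F i" for i
    unfolding g_def by (rule F_sm, rule F_monoI[OF ad_F[OF WF c]]) simp
  have te: "tends0 e" by (rule tends0_F, rule eF)
  have tg: "tends0 g" by (rule tends0_F, rule gF)
  have qeq: "q n = (\<Sum>i\<le>n. g i * e (n - i))" for n
  proof -
    have "q n = (\<Sum>i\<le>n. sm (inverse (fact (Suc n))) (sm (of_nat (Suc n choose Suc i)) ((ad W ^^ i) c * W ^ (n - i))))"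
      unfolding q_def om_ad sm_sum sm_of_nat ..
    also have "\<dots> = (\<Sum>i\<le>n. g i * e (n - i))"
    proof (rule sum.cong)
      fix i assume "i \<in> {..n}"
      then have "i \<le> n" by simp
      then show "sm (inverse (fact (Suc n))) (sm (of_nat (Suc n choose Suc i)) ((ad W ^^ i) c * W ^ (n - i))) = g i * e (n - i)"
        unfolding g_def e_def sm_both sm_mult[symmetric] by (simp only: coeff_id)
    qed simp
    finally show ?thesis .
  qed
  have "ssum g * ssum e = ssum (\<lambda>i. g i * ssum e)"
    by (rule ssum_linF[OF linF_multR tg, symmetric])
  also have "\<dots> = ssum (\<lambda>i. ssum (\<lambda>j. g i * e j))"
    by (rule arg_cong[where f = ssum], rule ext, rule ssum_linF[OF linF_multL te, symmetric])
  also have "\<dots> = ssum (\<lambda>n. \<Sum>i\<le>n. g i * e (n - i))"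
    by (rule double_sum) (intro F_mult gF eF)
  also have "\<dots> = ssum (\<lambda>n. sm (inverse (fact (Suc n))) (om W c n))"
    using qeq unfolding q_def by simp
  finally have "ssum (\<lambda>n. sm (inverse (fact (Suc n))) (om W c n)) = ssum g * filt_exp F sm W"
    unfolding exp_ssum e_def by simp
  then show ?thesis using exp_common[OF c] unfolding g_def W_def by simp
qed

lemma exp_R:
  assumes c: "c \<in> F 1"
  shows "filt_exp F sm (P c) = 1 + P (filt_exp F sm (P c) * ssum (\<lambda>i. sm (inverse (fact (Suc i))) ((adR (P c) ^^ i) c)))"
proof -
  define W where "W = P c"
  have WF: "W \<in> F 1" unfolding W_def by (rule F_P[OF c])
  define e where "e n = sm (inverse (fact n)) (W ^ n)" for n
  define g where "g i = sm (inverse (fact (Suc i))) ((adR W ^^ i) c)" for i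
  define q where "q n = sm (inverse (fact (Suc n))) (om W c n)" for n
  have eF: "e n \<in> F n" for n unfolding e_def by (intro F_sm F_pow WF)
  have gF: "g i \<in> F i" for i
    unfolding g_def by (rule F_sm, rule F_monoI[OF adR_F[OF WF c]]) simp
  have te: "tends0 e" by (rule tends0_F, rule eF)
  have tg: "tends0 g" by (rule tends0_F, rule gF)
  have qeq: "q n = (\<Sum>j\<le>n. e j * g (n - j))" for n
  proof -
    have "q n = (\<Sum>i\<le>n. sm (inverse (fact (Suc n))) (sm (of_nat (Suc n choose Suc i)) (W ^ (n - i) * (adR W ^^ i) c)))"
      unfolding q_def om_adR sm_sum sm_of_nat ..
    also have "\<dots> = (\<Sum>i\<le>n. e (n - i) * g i)"
    proof (rule sum.cong)
      fix i assume "i \<in> {..n}"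
      then have "i \<le> n" by simp
      then show "sm (inverse (fact (Suc n))) (sm (of_nat (Suc n choose Suc i)) (W ^ (n - i) * (adR W ^^ i) c)) = e (n - i) * g i"
      proof -
        have cc: "inverse (fact (Suc n)) * of_nat (Suc n choose Suc i) = (inverse (fact (n - i)) * inverse (fact (Suc i)) :: 'k)"
          using coeff_id[OF \<open>i \<le> n\<close>] by (metis mult.commute)
        show ?thesis unfolding g_def e_def sm_both sm_mult[symmetric] cc ..
      qed
    qed simp
    also have "\<dots> = (\<Sum>j\<le>n. e (n - (n - j)) * g (n - j))"
      by (rule sum_atMost_rev[symmetric])
    also have "\<dots> = (\<Sum>j\<le>n. e j * g (n - j))"
      by (rule sum.cong) auto
    finally show ?thesis .
  qed
  have "ssum e * ssum g = ssum (\<lambda>j. e j * ssum g)"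
    by (rule ssum_linF[OF linF_multR te, symmetric])
  also have "\<dots> = ssum (\<lambda>j. ssum (\<lambda>i. e j * g i))"
    by (rule arg_cong[where f = ssum], rule ext, rule ssum_linF[OF linF_multL tg, symmetric])
  also have "\<dots> = ssum (\<lambda>n. \<Sum>j\<le>n. e j * g (n - j))"
    by (rule double_sum) (intro F_mult gF eF)
  also have "\<dots> = ssum (\<lambda>n. sm (inverse (fact (Suc n))) (om W c n))"
    using qeq unfolding q_def by simp
  finally have "ssum (\<lambda>n. sm (inverse (fact (Suc n))) (om W c n)) = filt_exp F sm W * ssum g"
    unfolding exp_ssum e_def by simp
  then show ?thesis using exp_common[OF c] unfolding g_def W_def by simp
qed

end

context cfrb begin

lemma uniq_x:
  assumes a: "a \<in> F 1" and x1: "x1 = 1 - P (x1 * a)" and x2: "x2 = 1 - P (x2 * a)"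
  shows "x1 = x2"
proof -
  define d where "d = x1 - x2"
  have dd: "d = - P (d * a)"
  proof -
    have "d = P (x2 * a) - P (x1 * a)" unfolding d_def using x1 x2 by (metis diff_diff_eq2 diff_diff_cancel add_diff_cancel_left' diff_add_cancel)
    also have "\<dots> = - P (d * a)" unfolding d_def by (simp add: algebra_simps P_diff)
    finally show ?thesis .
  qed
  have "d \<in> F k" for k
  proof (induction k)
    case 0 then show ?case by (simp add: F0)
  next
    case (Suc k)
    have "d * a \<in> F (k + 1)" by (rule F_mult[OF Suc a])
    then have "- P (d * a) \<in> F (k + 1)" by (intro F_uminus F_P)
    then show ?case using dd by simp
  qed
  then have "d = 0" by (rule hausdorff)
  then show ?thesis unfolding d_def by simp
qed

lemma uniq_y:
  assumes a: "a \<in> F 1" and y1: "y1 = 1 + P (a * y1)" and y2: "y2 = 1 + P (a * y2)"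
  shows "y1 = y2"
proof -
  define d where "d = y1 - y2"
  have dd: "d = P (a * d)"
  proof -
    have "d = P (a * y1) - P (a * y2)" unfolding d_def using y1 y2 by (metis add_diff_cancel_left)
    also have "\<dots> = P (a * d)" unfolding d_def by (simp add: algebra_simps P_diff)
    finally show ?thesis .
  qed
  have "d \<in> F k" for k
  proof (induction k)
    case 0 then show ?case by (simp add: F0)
  next
    case (Suc k)
    have "a * d \<in> F (1 + k)" by (rule F_mult[OF a Suc])
    then have "P (a * d) \<in> F (1 + k)" by (rule F_P)
    then show ?case using dd by simp
  qed
  then have "d = 0" by (rule hausdorff)
  then show ?thesis unfolding d_def by simp
qed

lemma of_rat_fact': "(of_rat (fact n) :: 'k) = fact n"
  by (metis of_nat_fact of_rat_of_nat_eq)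

lemma G_eq_a:
  assumes a: "a \<in> F 1" and chiF: "chi \<in> F 1"
    and chi: "filt_sums F (\<lambda>n. sm (of_rat (bernoulli n / fact n)) ((ad (P chi) ^^ n) a)) chi"
  shows "ssum (\<lambda>i. sm (inverse (fact (Suc i))) ((ad (P chi) ^^ i) chi)) = a"
proof -
  define W where "W = P chi"
  have WF: "W \<in> F 1" unfolding W_def by (rule F_P[OF chiF])
  define \<beta> :: "nat \<Rightarrow> 'k" where "\<beta> n = of_rat (bernoulli n / fact n)" for n
  define u where "u n = sm (\<beta> n) ((ad W ^^ n) a)" for n
  have uF: "u n \<in> F n" for n
    unfolding u_def by (rule F_sm, rule F_monoI[OF ad_F[OF WF a]]) simp
  have tu: "tends0 u" by (rule tends0_F, rule uF)
  have chieq: "ssum u = chi" unfolding u_def \<beta>_def W_def by (rule ssum_eq[OF chi])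
  define h where "h i n = sm (inverse (fact (Suc i))) ((ad W ^^ i) (u n))" for i n
  have hF: "h i n \<in> F (i + n)" for i n
  proof -
    have "(ad W ^^ i) (u n) \<in> F (n + i)" by (rule ad_F[OF WF uF])
    then show ?thesis unfolding h_def by (intro F_sm) (simp add: add.commute)
  qed
  have L: "linF (ad W ^^ i)" for i by (rule linF_funpow, rule linF_ad)
  have "ssum (\<lambda>i. sm (inverse (fact (Suc i))) ((ad W ^^ i) chi)) = ssum (\<lambda>i. ssum (\<lambda>n. h i n))"
  proof (rule arg_cong[where f = ssum], rule ext)
    fix i
    have "(ad W ^^ i) chi = ssum (\<lambda>n. (ad W ^^ i) (u n))"
      unfolding chieq[symmetric] by (rule ssum_linF[OF L tu, symmetric])
    also have "sm (inverse (fact (Suc i))) \<dots> = ssum (\<lambda>n. h i n)"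
      unfolding h_def by (rule ssum_linF[OF linF_sm tends0_linF[OF L tu], symmetric])
    finally show "sm (inverse (fact (Suc i))) ((ad W ^^ i) chi) = ssum (\<lambda>n. h i n)" by simp
  qed
  also have "\<dots> = ssum (\<lambda>N. \<Sum>i\<le>N. h i (N - i))" by (rule double_sum[OF hF])
  also have "\<dots> = ssum (\<lambda>N. if N = 0 then a else 0)"
  proof (rule arg_cong[where f = ssum], rule ext)
    fix N
    have "(\<Sum>i\<le>N. h i (N - i)) = (\<Sum>i\<le>N. sm (inverse (fact (Suc i)) * \<beta> (N - i)) ((ad W ^^ N) a))"
    proof (rule sum.cong)
      fix i assume "i \<in> {..N}"
      then have iN: "i + (N - i) = N" by simp
      have "(ad W ^^ i) ((ad W ^^ (N - i)) a) = (ad W ^^ N) a"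
        by (metis iN funpow_add o_apply)
      then show "h i (N - i) = sm (inverse (fact (Suc i)) * \<beta> (N - i)) ((ad W ^^ N) a)"
        unfolding h_def u_def ad_sm sm_mult by simp
    qed simp
    also have "\<dots> = sm (\<Sum>i\<le>N. inverse (fact (Suc i)) * \<beta> (N - i)) ((ad W ^^ N) a)"
      by (rule sm_sumc[symmetric])
    also have "(\<Sum>i\<le>N. inverse (fact (Suc i)) * \<beta> (N - i)) = of_rat (\<Sum>i\<le>N. inverse (fact (Suc i)) * (bernoulli (N - i) / fact (N - i)))"
      unfolding \<beta>_def of_rat_sum of_rat_mult of_rat_inverse of_rat_fact' ..
    also have "\<dots> = (if N = 0 then 1 else 0)" unfolding bern_coeff by simp
    finally show "(\<Sum>i\<le>N. h i (N - i)) = (if N = 0 then a else 0)"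
      by (simp add: sm_one sm_zero_left)
  qed
  also have "\<dots> = a" by (rule ssum_eq[OF sums_single])
  finally show ?thesis unfolding W_def .
qed

lemma adR_neg: "adR (- W) = ad W"
  by (rule ext) (simp add: adR_def ad_def)

end

theorem lemma2p15:
  fixes smult :: "'k::field_char_0 \<Rightarrow> 'a::ring_1 \<Rightarrow> 'a"
    and P :: "'a \<Rightarrow> 'a" and F :: "nat \<Rightarrow> 'a set"
    and chi0 :: "'a \<Rightarrow> 'a" and a :: 'a
  assumes RB: "complete_filtered_RB0 smult P F"
    and chi0_maps: "\<forall>b\<in>F 1. chi0 b \<in> F 1"
    and chi0_eq: "\<forall>b\<in>F 1. filt_sums F
        (\<lambda>n. smult (of_rat (bernoulli n / fact n)) ((ad (P (chi0 b)) ^^ n) b)) (chi0 b)"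
    and a: "a \<in> F 1"
  shows "(\<forall>x. x = 1 - P (x * a) \<longleftrightarrow> x = filt_exp F smult (- P (chi0 a))) \<and>
         (\<forall>y. y = 1 + P (a * y) \<longleftrightarrow> y = filt_exp F smult (P (chi0 a)))"
proof -
  interpret cfrb smult P F by (rule cfrb.intro[OF RB])
  define chi where "chi = chi0 a"
  have chiF: "chi \<in> F 1" unfolding chi_def using chi0_maps a by blast
  have chis: "filt_sums F (\<lambda>n. smult (of_rat (bernoulli n / fact n)) ((ad (P chi) ^^ n) a)) chi"
    unfolding chi_def using chi0_eq a by blast
  have G: "ssum (\<lambda>i. smult (inverse (fact (Suc i))) ((ad (P chi) ^^ i) chi)) = a"
    by (rule G_eq_a[OF a chiF chis])
  define E where "E = filt_exp F smult (P chi)"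
  have Eeq: "E = 1 + P (a * E)"
    using exp_L[OF chiF] unfolding G E_def .
  define E' where "E' = filt_exp F smult (- P chi)"
  have nchiF: "- chi \<in> F 1" by (rule F_uminus[OF chiF])
  have G': "ssum (\<lambda>i. smult (inverse (fact (Suc i))) ((adR (P (- chi)) ^^ i) (- chi))) = - a"
  proof -
    have L: "linF (ad (P chi) ^^ i)" for i by (rule linF_funpow, rule linF_ad)
    have "(\<lambda>i. smult (inverse (fact (Suc i))) ((adR (P (- chi)) ^^ i) (- chi)))
        = (\<lambda>i. - smult (inverse (fact (Suc i))) ((ad (P chi) ^^ i) chi))"
      by (rule ext) (simp add: P_neg adR_neg linF_neg[OF L] sm_neg)
    moreover have "tends0 (\<lambda>i. smult (inverse (fact (Suc i))) ((ad (P chi) ^^ i) chi))"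
      by (rule tends0_F, rule F_sm, rule F_monoI[OF ad_F[OF F_P[OF chiF] chiF]]) simp
    ultimately show ?thesis using ssum_linF[OF linF_uminus] G by simp
  qed
  have "filt_exp F smult (P (- chi)) = 1 + P (filt_exp F smult (P (- chi)) * - a)"
    using exp_R[OF nchiF] unfolding G' .
  then have E'eq: "E' = 1 - P (E' * a)"
    unfolding E'_def by (simp add: P_neg)
  show ?thesis
  proof (intro conjI allI iffI)
    fix x assume "x = 1 - P (x * a)"
    then show "x = filt_exp F smult (- P (chi0 a))"
      using uniq_x[OF a _ E'eq] unfolding E'_def chi_def by blast
  next
    fix x assume "x = filt_exp F smult (- P (chi0 a))"
    then show "x = 1 - P (x * a)" using E'eq unfolding E'_def chi_def by simp
  next
    fix y assume "y = 1 + P (a * y)"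
    then show "y = filt_exp F smult (P (chi0 a))"
      using uniq_y[OF a _ Eeq] unfolding E_def chi_def by blast
  next
    fix y assume "y = filt_exp F smult (P (chi0 a))"
    then show "y = 1 + P (a * y)" using Eeq unfolding E_def chi_def by simp
  qed
qed


end
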